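(* Let $r,t\ge2$ be integers and let $m$ be any integer with $m\ge\log_2 t$. Then there exists a $(k_{t-1},b_r)$ resolvable configuration with $k=r^m$.
   Context: A $(k_{t-1},b_r)$ configuration is a pair $(X,\mathcal A)$ where $X$ is a set of $k$ points and $\mathcal A$ is a collection of $b$ subsets of $X$ (lines) such that (1) each line contains exactly $r$ points, (2) each point belongs to exactly $t-1$ lines, and (3) every pair of distinct points belongs to at most one line. It is resolvable if moreover (4) the lines can be partitioned into $t-1$ parallel classes, where a parallel class is a set of lines partitioning $X$. *)

theory Defs
  imports Complex_Main
begin

definition configuration :: "'a set \<Rightarrow> 'a set set \<Rightarrow> nat \<Rightarrow> nat \<Rightarrow> nat \<Rightarrow> nat \<Rightarrow> bool" where
  "configuration X A k s b r \<longleftrightarrow>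
     finite X \<and> card X = k \<and> (\<forall>L\<in>A. L \<subseteq> X) \<and> finite A \<and> card A = b \<and>
     (\<forall>L\<in>A. card L = r) \<and>
     (\<forall>x\<in>X. card {L\<in>A. x \<in> L} = s) \<and>
     (\<forall>x\<in>X. \<forall>y\<in>X. x \<noteq> y \<longrightarrow> card {L\<in>A. x \<in> L \<and> y \<in> L} \<le> 1)"

definition parallel_class :: "'a set \<Rightarrow> 'a set set \<Rightarrow> bool" where
  "parallel_class X P \<longleftrightarrow>
     (\<forall>L\<in>P. L \<noteq> {}) \<and> \<Union>P = X \<and> (\<forall>L\<in>P. \<forall>M\<in>P. L \<noteq> M \<longrightarrow> L \<inter> M = {})"

definition resolvable_configuration :: "'a set \<Rightarrow> 'a set set \<Rightarrow> nat \<Rightarrow> nat \<Rightarrow> nat \<Rightarrow> nat \<Rightarrow> bool" where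
  "resolvable_configuration X A k s b r \<longleftrightarrow>
     configuration X A k s b r \<and>
     (\<exists>P :: nat \<Rightarrow> 'a set set.
        (\<forall>i<s. parallel_class X (P i)) \<and>
        (\<Union>i<s. P i) = A \<and>
        (\<forall>i<s. \<forall>j<s. i \<noteq> j \<longrightarrow> P i \<inter> P j = {}))"

end

theory Submission
  imports Defs "HOL-Library.FuncSet" "HOL-Library.Countable"
begin


lemma transfer_rc:
  assumes R: "resolvable_configuration X A k s b r" and inj: "inj_on g X"
  shows "resolvable_configuration (g ` X) (image g ` A) k s b r"
proof -
  have C: "configuration X A k s b r" using R unfolding resolvable_configuration_def by blast
  from R obtain P where P1: "\<forall>i<s. parallel_class X (P i)" and P2: "(\<Union>i<s. P i) = A"
     and P3: "\<forall>i<s. \<forall>j<s. i \<noteq> j \<longrightarrow> P i \<inter> P j = {}"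
    unfolding resolvable_configuration_def by blast
  have sub: "A \<subseteq> Pow X" using C unfolding configuration_def by blast
  have ih: "inj_on (image g) (Pow X)" using inj by (rule inj_on_image_Pow)
  have ihA: "inj_on (image g) A" using ih sub inj_on_subset by blast
  have mem: "g x \<in> g ` L \<longleftrightarrow> x \<in> L" if "L \<subseteq> X" "x \<in> X" for x L
    using that inj by (auto simp: inj_on_def)
  have gen: "{y \<in> f ` B. Q y} = f ` {x\<in>B. Q (f x)}" for f :: "'a set \<Rightarrow> 'b set" and B Q by auto
  have e1: "{L'\<in>image g ` A. g x \<in> L'} = image g ` {L\<in>A. x \<in> L}" if "x \<in> X" for x
  proof -
    have "{L\<in>A. g x \<in> g ` L} = {L\<in>A. x \<in> L}" using mem sub that by blast
    then show ?thesis by (simp only: gen)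
  qed
  have e2: "{L'\<in>image g ` A. g x \<in> L' \<and> g y \<in> L'} = image g ` {L\<in>A. x \<in> L \<and> y \<in> L}"
    if "x \<in> X" "y \<in> X" for x y
  proof -
    have "{L\<in>A. g x \<in> g ` L \<and> g y \<in> g ` L} = {L\<in>A. x \<in> L \<and> y \<in> L}" using mem sub that by blast
    then show ?thesis by (simp only: gen)
  qed
  have c1: "card (image g ` B) = card B" if "B \<subseteq> A" for B
    using card_image[OF inj_on_subset[OF ihA that]] .
  have conf: "configuration (g ` X) (image g ` A) k s b r"
    unfolding configuration_def
  proof (intro conjI ballI impI)
    show "finite (g ` X)" using C unfolding configuration_def by blast
    show "card (g ` X) = k" using C inj card_image unfolding configuration_def by metis
    show "L \<subseteq> g ` X" if "L \<in> image g ` A" for L using that sub by blast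
    show "finite (image g ` A)" using C unfolding configuration_def by blast
    show "card (image g ` A) = b" using c1[of A] C unfolding configuration_def by simp
    show "card L = r" if LL: "L \<in> image g ` A" for L
    proof -
      obtain M where "M \<in> A" "L = g ` M" using LL by blast
      then show ?thesis using C sub card_image[OF inj_on_subset[OF inj]] unfolding configuration_def
        by (metis PowD in_mono)
    qed
    show "card {L \<in> image g ` A. x \<in> L} = s" if xx: "x \<in> g ` X" for x
    proof -
      obtain y where y: "y \<in> X" "x = g y" using xx by blast
      have "card {L \<in> image g ` A. x \<in> L} = card {L\<in>A. y \<in> L}" using e1[OF y(1)] y(2) c1 by simp
      then show ?thesis using C y unfolding configuration_def by simp
    qed
    show "card {L \<in> image g ` A. x \<in> L \<and> y \<in> L} \<le> 1" if xy: "x \<in> g ` X" "y \<in> g ` X" "x \<noteq> y" for x y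
    proof -
      obtain x' where x: "x' \<in> X" "x = g x'" using xy by blast
      obtain y' where y: "y' \<in> X" "y = g y'" using xy by blast
      have "x' \<noteq> y'" using x y xy by blast
      have "card {L \<in> image g ` A. x \<in> L \<and> y \<in> L} = card {L\<in>A. x' \<in> L \<and> y' \<in> L}"
        using e2[OF x(1) y(1)] x(2) y(2) c1 by simp
      then show ?thesis using C x y \<open>x' \<noteq> y'\<close> unfolding configuration_def by simp
    qed
  qed
  define P' where "P' i = image g ` P i" for i
  have PA: "P i \<subseteq> A" if "i < s" for i using P2 that by blast
  have pc: "parallel_class (g ` X) (P' i)" if ii: "i < s" for i
  proof -
    have pci: "parallel_class X (P i)" using P1 ii by blast
    show ?thesis unfolding parallel_class_def P'_def
    proof (intro conjI ballI impI)
      show "L \<noteq> {}" if "L \<in> image g ` P i" for L using that pci unfolding parallel_class_def by blast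
      show "\<Union> (image g ` P i) = g ` X" using pci unfolding parallel_class_def by blast
      show "L \<inter> M = {}" if LM: "L \<in> image g ` P i" "M \<in> image g ` P i" "L \<noteq> M" for L M
      proof -
        obtain L' where L': "L' \<in> P i" "L = g ` L'" using LM by blast
        obtain M' where M': "M' \<in> P i" "M = g ` M'" using LM by blast
        have "L' \<noteq> M'" using L' M' LM by blast
        hence "L' \<inter> M' = {}" using pci L' M' unfolding parallel_class_def by blast
        moreover have "L' \<subseteq> X" "M' \<subseteq> X" using L' M' PA[OF ii] sub by auto
        ultimately show ?thesis using L' M' inj_on_image_Int[OF inj] by (metis image_empty)
      qed
    qed
  qed
  have un: "(\<Union>i<s. P' i) = image g ` A" using P2 unfolding P'_def by blast
  have dj: "P' i \<inter> P' j = {}" if "i < s" "j < s" "i \<noteq> j" for i j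
  proof -
    have "P i \<inter> P j = {}" using P3 that by simp
    then show ?thesis unfolding P'_def
      using inj_on_image_Int[OF ihA PA[OF that(1)] PA[OF that(2)]] by simp
  qed
  have "(\<forall>i<s. parallel_class (g`X) (P' i)) \<and> (\<Union>i<s. P' i) = image g ` A \<and> (\<forall>i<s. \<forall>j<s. i\<noteq>j \<longrightarrow> P' i \<inter> P' j = {})"
    using pc un dj by simp
  then show ?thesis unfolding resolvable_configuration_def by (rule conjI[OF conf exI[of _ P']])
qed



lemma mod_cancel_aux:
  fixes a l l' r :: nat
  assumes "(a + l) mod r = (a + l') mod r" "l < r" "l' < r"
  shows "l = l'"
proof -
  have r: "r > 0" using assms by simp
  define c where "c = a mod r"
  have c: "c < r" using r unfolding c_def by simp
  have e: "(c + l) mod r = (c + l') mod r" using assms(1) unfolding c_def by (simp add: mod_add_left_eq)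
  have f: "(c + x) mod r = (if c + x < r then c + x else c + x - r)" if "x < r" for x
    using c that by (simp add: le_mod_geq)
  show ?thesis using e f[OF assms(2)] f[OF assms(3)] assms(2,3) c by (auto split: if_splits)
qed

lemma log_aux:
  fixes t :: nat and m :: int
  assumes "t \<ge> 2" "real_of_int m \<ge> log 2 (real t)"
  shows "t \<le> 2 ^ nat m" "m \<ge> 0"
proof -
  have "log 2 (real t) \<ge> log 2 2" using assms by simp
  moreover have "log 2 (2::real) = 1" by simp
  ultimately have "real_of_int m \<ge> 1" using assms(2) by linarith
  hence m1: "m \<ge> 1" by simp
  thus "m \<ge> 0" by simp
  have "real t = 2 powr (log 2 (real t))" using assms by simp
  also have "\<dots> \<le> 2 powr (real_of_int m)" using assms by (intro powr_mono) auto
  also have "\<dots> = 2 ^ nat m" using m1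
    by (metis of_int_0_le_iff of_nat_nat order_trans powr_realpow zero_less_numeral zero_le_one of_int_of_nat_eq)
  finally show "t \<le> 2 ^ nat m" by (metis of_nat_le_iff of_nat_numeral of_nat_power)
qed



definition sh :: "nat \<Rightarrow> nat \<Rightarrow> (nat\<Rightarrow>nat) \<Rightarrow> nat \<Rightarrow> (nat\<Rightarrow>nat) \<Rightarrow> nat \<Rightarrow> nat" where
  "sh n r x l d = restrict (\<lambda>i. (x i + l * d i) mod r) {0..<n}"

definition line :: "nat \<Rightarrow> nat \<Rightarrow> (nat\<Rightarrow>nat) \<Rightarrow> (nat\<Rightarrow>nat) \<Rightarrow> (nat \<Rightarrow> nat) set" where
  "line n r x d = (\<lambda>l. sh n r x l d) ` {0..<r}"

definition Pts :: "nat \<Rightarrow> nat \<Rightarrow> (nat \<Rightarrow> nat) set" where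
  "Pts n r = PiE {0..<n} (\<lambda>_. {0..<r})"

definition Dirs :: "nat \<Rightarrow> (nat \<Rightarrow> nat) set" where
  "Dirs n = {d \<in> PiE {0..<n} (\<lambda>_. {0,1}). \<exists>i<n. d i \<noteq> 0}"

lemma sh_in: "0 < r \<Longrightarrow> sh n r x l d \<in> Pts n r"
  unfolding sh_def Pts_def by auto

lemma sh0: "x \<in> Pts n r \<Longrightarrow> sh n r x 0 d = x"
  unfolding sh_def Pts_def
proof (rule ext)
  fix i assume x: "x \<in> PiE {0..<n} (\<lambda>_. {0..<r})"
  show "restrict (\<lambda>i. (x i + 0 * d i) mod r) {0..<n} i = x i"
  proof (cases "i < n")
    case True then show ?thesis using x by (auto simp: PiE_iff)
  next
    case False then show ?thesis using x by (auto simp: PiE_iff extensional_def)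
  qed
qed

lemma sh_sh: "sh n r (sh n r x l d) u d = sh n r x ((l+u) mod r) d"
  unfolding sh_def
proof (rule ext)
  fix i
  show "restrict (\<lambda>i. (restrict (\<lambda>i. (x i + l * d i) mod r) {0..<n} i + u * d i) mod r) {0..<n} i =
    restrict (\<lambda>i. (x i + (l + u) mod r * d i) mod r) {0..<n} i"
  proof (cases "i < n")
    case True
    have "((x i + l * d i) mod r + u * d i) mod r = (x i + l * d i + u * d i) mod r"
      by (rule mod_add_left_eq)
    also have "\<dots> = (x i + (l + u) * d i) mod r" by (simp add: algebra_simps)
    also have "\<dots> = (x i + (l + u) mod r * d i) mod r"
      by (metis mod_add_right_eq mod_mult_left_eq)
    finally show ?thesis using True by simp
  qed simp
qed

lemma line_sub: "0 < r \<Longrightarrow> line n r x d \<subseteq> Pts n r"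
  unfolding line_def using sh_in by blast

lemma self_in_line: "x \<in> Pts n r \<Longrightarrow> 0 < r \<Longrightarrow> x \<in> line n r x d"
  unfolding line_def using sh0[of x n r d] by force

lemma line_mono: assumes "y \<in> line n r x d" shows "line n r y d \<subseteq> line n r x d"
proof
  fix z assume "z \<in> line n r y d"
  then obtain u where u: "u < r" "z = sh n r y u d" unfolding line_def by auto
  obtain l where l: "l < r" "y = sh n r x l d" using assms unfolding line_def by auto
  have "z = sh n r x ((l+u) mod r) d" using u l sh_sh by simp
  moreover have "(l+u) mod r < r" using l by simp
  ultimately show "z \<in> line n r x d" unfolding line_def by auto
qed

lemma line_back: assumes "x \<in> Pts n r" "y \<in> line n r x d" shows "x \<in> line n r y d"
proof -
  obtain l where l: "l < r" "y = sh n r x l d" using assms unfolding line_def by auto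
  have "(l + (r - l) mod r) mod r = (l + (r - l)) mod r" by (simp add: mod_add_right_eq)
  also have "\<dots> = 0" using l by simp
  finally have "sh n r y ((r - l) mod r) d = x" using l sh_sh sh0[OF assms(1)] by simp
  moreover have "(r - l) mod r < r" using l by simp
  ultimately show ?thesis unfolding line_def by force
qed

lemma line_eq: assumes "x \<in> Pts n r" "y \<in> line n r x d" shows "line n r y d = line n r x d"
  using line_mono[OF assms(2)] line_mono[OF line_back[OF assms]] by blast

lemma dir_one: assumes "d \<in> Dirs n" obtains i where "i < n" "d i = 1"
proof -
  obtain i where i: "i < n" "d i \<noteq> 0" using assms unfolding Dirs_def by auto
  have "d \<in> PiE {0..<n} (\<lambda>_. {0,1})" using assms unfolding Dirs_def by simp
  hence "d i \<in> {0,1}" using i(1) PiE_mem[of d "{0..<n}" "\<lambda>_. {0,1}" i] by simp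
  hence "d i = 1" using i by auto
  thus ?thesis using that i by blast
qed

lemma sh_inj: assumes "d \<in> Dirs n" "sh n r x l d = sh n r x l' d" "l < r" "l' < r"
  shows "l = l'"
proof -
  obtain i where i: "i < n" "d i = 1" using dir_one[OF assms(1)] .
  have "sh n r x l d i = sh n r x l' d i" using assms by simp
  hence "(x i + l) mod r = (x i + l') mod r" using i unfolding sh_def by simp
  then show ?thesis using mod_cancel_aux assms by blast
qed

lemma card_line: assumes "d \<in> Dirs n" shows "card (line n r x d) = r"
proof -
  have "inj_on (\<lambda>l. sh n r x l d) {0..<r}" using sh_inj[OF assms] by (auto simp: inj_on_def)
  then show ?thesis unfolding line_def by (simp add: card_image)
qed

lemma key: assumes d: "d \<in> Dirs n" and d': "d' \<in> Dirs n" and ne: "d \<noteq> d'"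
  and p: "p \<in> Pts n r" and q: "q \<in> line n r p d" "q \<in> line n r p d'"
  shows "q = p"
proof -
  obtain a where a: "a < r" "q = sh n r p a d" using q unfolding line_def by auto
  obtain b where b: "b < r" "q = sh n r p b d'" using q unfolding line_def by auto
  have "\<exists>i<n. d i \<noteq> d' i"
  proof (rule ccontr)
    assume "\<not> ?thesis"
    hence "d = d'" using d d' unfolding Dirs_def by (intro PiE_ext[of d "{0..<n}" "\<lambda>_. {0,1}"]) auto
    thus False using ne by simp
  qed
  then obtain i where i: "i < n" "d i \<noteq> d' i" by blast
  have di: "d i \<in> {0,1}" "d' i \<in> {0,1}" using d d' i unfolding Dirs_def by (auto simp: PiE_iff)
  have pi: "p i < r" using p i unfolding Pts_def by (auto simp: PiE_iff)
  have "sh n r p a d i = sh n r p b d' i" using a b by simp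
  hence eq: "(p i + a * d i) mod r = (p i + b * d' i) mod r"
    using i unfolding sh_def by simp
  show ?thesis
  proof (cases "d i = 1")
    case True
    hence "d' i = 0" using di i by auto
    hence "(p i + a) mod r = (p i + 0) mod r" using eq True by simp
    hence "a = 0" using mod_cancel_aux a pi by blast
    thus ?thesis using a sh0[OF p] by simp
  next
    case False
    hence "d i = 0" "d' i = 1" using di i by auto
    hence "(p i + b) mod r = (p i + 0) mod r" using eq by simp
    hence "b = 0" using mod_cancel_aux b pi by blast
    thus ?thesis using b sh0[OF p] by simp
  qed
qed

lemma key2: assumes "d \<in> Dirs n" "d' \<in> Dirs n" "d \<noteq> d'" "0 < r"
  "x \<in> Pts n r" "y \<in> Pts n r"
  "p \<in> line n r x d" "p \<in> line n r y d'" "q \<in> line n r x d" "q \<in> line n r y d'"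
  shows "q = p"
proof -
  have pP: "p \<in> Pts n r" using assms line_sub by blast
  have "line n r x d = line n r p d" using line_eq assms by metis
  moreover have "line n r y d' = line n r p d'" using line_eq assms by metis
  ultimately show ?thesis using key[OF assms(1-3) pP] assms by blast
qed

lemma card_Dirs: "card (Dirs n) = 2 ^ n - 1"
proof -
  define z where "z = restrict (\<lambda>_. 0::nat) {0..<n}"
  have zin: "z \<in> PiE {0..<n} (\<lambda>_. {0,1})" unfolding z_def by auto
  have "Dirs n = PiE {0..<n} (\<lambda>_. {0,1::nat}) - {z}"
  proof
    show "Dirs n \<subseteq> PiE {0..<n} (\<lambda>_. {0,1::nat}) - {z}" unfolding Dirs_def z_def by auto
    show "PiE {0..<n} (\<lambda>_. {0,1::nat}) - {z} \<subseteq> Dirs n"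
    proof
      fix d assume dd: "d \<in> PiE {0..<n} (\<lambda>_. {0,1::nat}) - {z}"
      have "\<exists>i<n. d i \<noteq> 0"
      proof (rule ccontr)
        assume "\<not> ?thesis"
        hence "d = z" using dd zin by (intro PiE_ext[of d "{0..<n}" "\<lambda>_. {0,1}"]) (auto simp: z_def)
        thus False using dd by simp
      qed
      thus "d \<in> Dirs n" using dd unfolding Dirs_def by auto
    qed
  qed
  moreover have "card (PiE {0..<n} (\<lambda>_. {0,1::nat})) = 2 ^ n" by (simp add: card_PiE numeral_2_eq_2)
  ultimately show ?thesis using zin by (simp add: card_Diff_singleton)
qed



lemma main_fun:
  fixes r n s :: nat
  assumes r2: "r \<ge> 2" and sle: "s \<le> 2 ^ n - 1"
  shows "\<exists>A b. resolvable_configuration (Pts n r) A (r ^ n) s b r"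
proof -
  have r0: "0 < r" using r2 by simp
  obtain dir where dirD: "dir ` {..<s} \<subseteq> Dirs n" and dinj: "inj_on dir {..<s}"
  proof -
    have "finite (Dirs n)" unfolding Dirs_def by (simp add: finite_PiE)
    moreover have "card {..<s} \<le> card (Dirs n)" using sle card_Dirs by simp
    ultimately show ?thesis using card_le_inj[of "{..<s}" "Dirs n"] that by blast
  qed
  have dD: "dir j \<in> Dirs n" if "j < s" for j using dirD that by blast
  define P where "P j = (\<lambda>x. line n r x (dir j)) ` Pts n r" for j
  define A where "A = (\<Union>j<s. P j)"
  have finP: "finite (Pts n r)" unfolding Pts_def by (simp add: finite_PiE)
  have AP: "A \<subseteq> Pow (Pts n r)" unfolding A_def P_def using line_sub[OF r0] by blast
  have finA: "finite A" using AP finP by (meson finite_Pow_iff rev_finite_subset)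
  have Aelem: "\<exists>j<s. \<exists>x\<in>Pts n r. L = line n r x (dir j)" if "L \<in> A" for L
    using that unfolding A_def P_def by blast
  have two: "sh n r z 1 d \<in> line n r z d \<and> sh n r z 1 d \<noteq> z" if "z \<in> Pts n r" "d \<in> Dirs n" for z d
  proof
    show "sh n r z 1 d \<in> line n r z d" unfolding line_def using r2 by force
    show "sh n r z 1 d \<noteq> z"
    proof
      assume "sh n r z 1 d = z"
      hence "sh n r z 1 d = sh n r z 0 d" using sh0[OF that(1)] by simp
      hence "(1::nat) = 0" using sh_inj[OF that(2)] r2 by fastforce
      thus False by simp
    qed
  qed
  have linedir: "d = d'" if "z \<in> Pts n r" "d \<in> Dirs n" "d' \<in> Dirs n" "line n r z d = line n r z d'" for z d d'
  proof (rule ccontr)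
    assume ne: "d \<noteq> d'"
    have "sh n r z 1 d \<in> line n r z d'" using two[OF that(1,2)] that(4) by simp
    hence "sh n r z 1 d = z" using key[OF that(2,3) ne that(1)] two[OF that(1,2)] by blast
    thus False using two[OF that(1,2)] by simp
  qed
  have conf: "configuration (Pts n r) A (r ^ n) s (card A) r"
    unfolding configuration_def
  proof (intro conjI ballI impI)
    show "finite (Pts n r)" by (rule finP)
    show "card (Pts n r) = r ^ n" unfolding Pts_def by (simp add: card_PiE)
    show "L \<subseteq> Pts n r" if "L \<in> A" for L using AP that by blast
    show "finite A" by (rule finA)
    show "card A = card A" ..
    show "card L = r" if LA: "L \<in> A" for L
      using Aelem[OF LA] card_line dD by blast
    show "card {L \<in> A. z \<in> L} = s" if z: "z \<in> Pts n r" for z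
    proof -
      have "{L \<in> A. z \<in> L} = (\<lambda>j. line n r z (dir j)) ` {..<s}"
      proof
        show "{L \<in> A. z \<in> L} \<subseteq> (\<lambda>j. line n r z (dir j)) ` {..<s}"
        proof
          fix L assume "L \<in> {L \<in> A. z \<in> L}"
          hence LA: "L \<in> A" "z \<in> L" by auto
          then obtain j x where jx: "j < s" "x \<in> Pts n r" "L = line n r x (dir j)" using Aelem by blast
          hence "L = line n r z (dir j)" using line_eq[OF jx(2), of z "dir j"] LA(2) by simp
          thus "L \<in> (\<lambda>j. line n r z (dir j)) ` {..<s}" using jx by blast
        qed
        show "(\<lambda>j. line n r z (dir j)) ` {..<s} \<subseteq> {L \<in> A. z \<in> L}"
          using self_in_line[OF z r0] z unfolding A_def P_def by blast
      qed
      moreover have "inj_on (\<lambda>j. line n r z (dir j)) {..<s}"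
      proof (rule inj_onI)
        fix i j assume ij: "i \<in> {..<s}" "j \<in> {..<s}" "line n r z (dir i) = line n r z (dir j)"
        hence "dir i = dir j" using linedir[OF z] dD by simp
        thus "i = j" using dinj ij by (meson inj_onD)
      qed
      ultimately show ?thesis by (simp add: card_image)
    qed
    show "card {L \<in> A. x \<in> L \<and> y \<in> L} \<le> 1" if xy: "x \<in> Pts n r" "y \<in> Pts n r" "x \<noteq> y" for x y
    proof -
      have all: "\<forall>L1\<in>{L \<in> A. x \<in> L \<and> y \<in> L}. \<forall>L2\<in>{L \<in> A. x \<in> L \<and> y \<in> L}. L1 = L2"
      proof (intro ballI)
        fix L1 L2 assume L: "L1 \<in> {L \<in> A. x \<in> L \<and> y \<in> L}" "L2 \<in> {L \<in> A. x \<in> L \<and> y \<in> L}"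
        obtain i u where iu: "i < s" "u \<in> Pts n r" "L1 = line n r u (dir i)" using Aelem L by blast
        obtain j v where jv: "j < s" "v \<in> Pts n r" "L2 = line n r v (dir j)" using Aelem L by blast
        have x1: "x \<in> L1" "y \<in> L1" "x \<in> L2" "y \<in> L2" using L by auto
        show "L1 = L2"
        proof (cases "dir i = dir j")
          case True
          have "L1 = line n r x (dir i)" using line_eq[OF iu(2), of x "dir i"] iu(3) x1 by simp
          moreover have "L2 = line n r x (dir j)" using line_eq[OF jv(2), of x "dir j"] jv(3) x1 by simp
          ultimately show ?thesis using True by simp
        next
          case False
          have "y = x" using key2[OF dD[OF iu(1)] dD[OF jv(1)] False r0 iu(2) jv(2), of x y] iu(3) jv(3) x1 by simp
          thus ?thesis using xy by simp
        qed
      qed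
      have fin: "finite {L \<in> A. x \<in> L \<and> y \<in> L}" using finA by simp
      show ?thesis using card_le_Suc0_iff_eq[OF fin] all by simp
    qed
  qed
  have pc: "parallel_class (Pts n r) (P j)" if j: "j < s" for j
    unfolding parallel_class_def
  proof (intro conjI ballI impI)
    show "L \<noteq> {}" if "L \<in> P j" for L using that self_in_line[OF _ r0] unfolding P_def by blast
    show "\<Union> (P j) = Pts n r"
      using self_in_line[OF _ r0] line_sub[OF r0] unfolding P_def by blast
    show "L \<inter> M = {}" if LM: "L \<in> P j" "M \<in> P j" "L \<noteq> M" for L M
    proof (rule ccontr)
      assume "L \<inter> M \<noteq> {}"
      then obtain z where z: "z \<in> L" "z \<in> M" by blast
      obtain x where x: "x \<in> Pts n r" "L = line n r x (dir j)" using LM unfolding P_def by blast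
      obtain y where y: "y \<in> Pts n r" "M = line n r y (dir j)" using LM unfolding P_def by blast
      have "L = line n r z (dir j)" using line_eq[OF x(1), of z "dir j"] x(2) z by simp
      moreover have "M = line n r z (dir j)" using line_eq[OF y(1), of z "dir j"] y(2) z by simp
      ultimately show False using LM by simp
    qed
  qed
  have dj: "P i \<inter> P j = {}" if ij: "i < s" "j < s" "i \<noteq> j" for i j
  proof (rule ccontr)
    assume "P i \<inter> P j \<noteq> {}"
    then obtain L where L: "L \<in> P i" "L \<in> P j" by blast
    obtain x where x: "x \<in> Pts n r" "L = line n r x (dir i)" using L unfolding P_def by blast
    obtain y where y: "y \<in> Pts n r" "L = line n r y (dir j)" using L unfolding P_def by blast
    have ne: "dir i \<noteq> dir j" using dinj ij by (meson inj_onD lessThan_iff)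
    have "x \<in> L" using x self_in_line[OF x(1) r0] by simp
    moreover have "sh n r x 1 (dir i) \<in> L" using two[OF x(1) dD[OF ij(1)]] x by simp
    ultimately have "sh n r x 1 (dir i) = x"
      using key2[OF dD[OF ij(1)] dD[OF ij(2)] ne r0 x(1) y(1), of x "sh n r x 1 (dir i)"] x y by simp
    thus False using two[OF x(1) dD[OF ij(1)]] by simp
  qed
  have "(\<forall>i<s. parallel_class (Pts n r) (P i)) \<and> (\<Union>i<s. P i) = A \<and> (\<forall>i<s. \<forall>j<s. i\<noteq>j \<longrightarrow> P i \<inter> P j = {})"
    using pc dj unfolding A_def by simp
  then have "resolvable_configuration (Pts n r) A (r ^ n) s (card A) r"
    unfolding resolvable_configuration_def by (rule conjI[OF conf exI[of _ P]])
  then show ?thesis by blast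
qed


theorem lemma10:
  fixes r t :: nat and m :: int
  assumes "r \<ge> 2" and "t \<ge> 2" and "real_of_int m \<ge> log 2 (real t)"
  shows "\<exists>(X :: nat set) A b. resolvable_configuration X A (r ^ nat m) (t - 1) b r"
proof -
  have "t \<le> 2 ^ nat m" using log_aux[OF assms(2,3)] by simp
  hence "t - 1 \<le> 2 ^ nat m - 1" by simp
  then obtain A b where R: "resolvable_configuration (Pts (nat m) r) A (r ^ nat m) (t - 1) b r"
    using main_fun[OF assms(1)] by blast
  define g where "g f = to_nat (map f [0..<nat m])" for f :: "nat \<Rightarrow> nat"
  have "inj_on g (Pts (nat m) r)"
  proof (rule inj_onI)
    fix f f' assume ff: "f \<in> Pts (nat m) r" "f' \<in> Pts (nat m) r" "g f = g f'"
    hence "map f [0..<nat m] = map f' [0..<nat m]" unfolding g_def by simp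
    hence "\<forall>i\<in>{0..<nat m}. f i = f' i" by (simp add: map_eq_conv)
    thus "f = f'" using ff unfolding Pts_def by (intro PiE_ext[of f "{0..<nat m}" "\<lambda>_. {0..<r}"]) auto
  qed
  from transfer_rc[OF R this] show ?thesis by blast
qed

end
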